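(* Let $a\in[0,1]$ and, for $x\in(0,1)$, $$f(x):=\pi^2-36\big(\arcsin\tfrac x2\big)^2,\qquad g(x):=9(1-x^2).$$ Then $\mathrm{ARE}_{R,T}=f/g$ on $(0,1)$. Let $b:=\frac fg(a)$ and $c:=\big(\frac fg\big)'(a)$ (for $a=1$ these mean the one-sided limits at $1-$), and define $f_0(x):=f(x)-bg(x)-c(x-a)g(x)$, $g_0(x):=(x-a)^2g(x)$, and for $i=1,2,3,4$, $f_i:=a_if_{i-1}'$, $g_i:=a_ig_{i-1}'$, $r_i:=f_i/g_i$, where $$a_1(x)=\sqrt{4-x^2},\quad a_2(x)=\frac{\sqrt{4-x^2}}{2-x^2},\quad a_3(x)=\frac{(2-x^2)^2}{50-29x^2+9x^4},\quad a_4(x)=\frac{(50-29x^2+9x^4)^2}{2-x^2}.$$ Then on $(0,1)$: $r_4$ is strictly increasing, $f_4<0$ and $g_4<0$.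
   Context: $\mathrm{ARE}_{R,T}(\rho_0)$ is the Pitman asymptotic relative efficiency of Pearson's correlation $R$ to Kendall's $T$ for testing $H_0:\rho=\rho_0$ with i.i.d. bivariate normal data of correlation $\rho$; it equals $\frac{\sigma_T^2(\rho_0)\mu_R'(\rho_0)^2}{\sigma_R^2(\rho_0)\mu_T'(\rho_0)^2}$ with $\mu_R(\rho)=\rho$, $\sigma_R^2(\rho)=(1-\rho^2)^2$, $\mu_T(\rho)=\frac2\pi\arcsin\rho$, $\sigma_T^2(\rho)=\frac49-\frac{16}{\pi^2}(\arcsin\frac\rho2)^2$. *)

theory Defs
  imports "HOL-Analysis.Analysis"
begin

text \<open>Moments of Pearson's R and Kendall's T under bivariate normal data.\<close>
definition muR :: "real \<Rightarrow> real" where "muR \<rho> = \<rho>"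
definition sigR2 :: "real \<Rightarrow> real" where "sigR2 \<rho> = (1 - \<rho>^2)^2"
definition muT :: "real \<Rightarrow> real" where "muT \<rho> = 2 / pi * arcsin \<rho>"
definition sigT2 :: "real \<Rightarrow> real" where
  "sigT2 \<rho> = 4/9 - 16 / pi^2 * (arcsin (\<rho>/2))^2"

definition ARE_RT :: "real \<Rightarrow> real" where
  "ARE_RT \<rho>0 = sigT2 \<rho>0 * (deriv muR \<rho>0)^2 / (sigR2 \<rho>0 * (deriv muT \<rho>0)^2)"

definition fA :: "real \<Rightarrow> real" where "fA x = pi^2 - 36 * (arcsin (x/2))^2"
definition gA :: "real \<Rightarrow> real" where "gA x = 9 * (1 - x^2)"

definition bcoef :: "real \<Rightarrow> real" where
  "bcoef a = (if a = 1 then Lim (at_left 1) (\<lambda>x. fA x / gA x) else fA a / gA a)"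
definition ccoef :: "real \<Rightarrow> real" where
  "ccoef a = (if a = 1 then Lim (at_left 1) (deriv (\<lambda>x. fA x / gA x))
              else deriv (\<lambda>x. fA x / gA x) a)"

definition f0 :: "real \<Rightarrow> real \<Rightarrow> real" where
  "f0 a x = fA x - bcoef a * gA x - ccoef a * (x - a) * gA x"
definition g0 :: "real \<Rightarrow> real \<Rightarrow> real" where
  "g0 a x = (x - a)^2 * gA x"

fun acoef :: "nat \<Rightarrow> real \<Rightarrow> real" where
  "acoef (Suc 0) x = sqrt (4 - x^2)"
| "acoef (Suc (Suc 0)) x = sqrt (4 - x^2) / (2 - x^2)"
| "acoef (Suc (Suc (Suc 0))) x = (2 - x^2)^2 / (50 - 29*x^2 + 9*x^4)"
| "acoef (Suc (Suc (Suc (Suc 0)))) x = (50 - 29*x^2 + 9*x^4)^2 / (2 - x^2)"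
| "acoef _ x = 1"

primrec fI :: "real \<Rightarrow> nat \<Rightarrow> real \<Rightarrow> real" where
  "fI a 0 = f0 a"
| "fI a (Suc i) = (\<lambda>x. acoef (Suc i) x * deriv (fI a i) x)"

primrec gI :: "real \<Rightarrow> nat \<Rightarrow> real \<Rightarrow> real" where
  "gI a 0 = g0 a"
| "gI a (Suc i) = (\<lambda>x. acoef (Suc i) x * deriv (gI a i) x)"

definition rI :: "real \<Rightarrow> nat \<Rightarrow> real \<Rightarrow> real" where
  "rI a i x = fI a i x / gI a i x"

end

theory Submission imports Defs begin

lemma deriv_on_open:
  assumes "open S" "x \<in> S" "\<And>y. y \<in> S \<Longrightarrow> f y = g y" "(g has_real_derivative D) (at x)"
  shows "deriv f x = D"
proof -
  have "(f has_real_derivative D) (at x)"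
    by (rule has_field_derivative_transform_within_open[OF assms(4) assms(1,2)]) (use assms(3) in simp)
  thus ?thesis by (rule DERIV_imp_deriv)
qed

lemma sq_half: assumes "\<bar>x\<bar> < 2" shows "sqrt (1 - (x/2)^2) = sqrt (4 - x^2) / 2"
proof -
  have e: "1 - (x/2)^2 = (4 - x^2) / 4" by (simp add: field_simps power2_eq_square)
  have s4: "sqrt 4 = (2::real)" by (rule real_sqrt_unique) auto
  show ?thesis by (subst e) (simp add: real_sqrt_divide s4)
qed

lemma are_alg:
  fixes P X A :: real
  assumes "P > 0" "1 - X^2 > 0"
  shows "(4/9 - 16/P^2*A^2)*1^2/((1 - X^2)^2*(4/(P^2*(1 - X^2)))) = (P^2 - 36*A^2)/(9*(1 - X^2))"
proof -
  have e: "(1 - X^2)^2*(4/(P^2*(1 - X^2))) = 4*(1-X^2)/P^2" using assms by (simp add: field_simps power2_eq_square)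
  show ?thesis unfolding e using assms by (simp add: field_simps power2_eq_square)
qed

lemma ARE_part:
  assumes "x \<in> {0<..<1::real}"
  shows "ARE_RT x = fA x / gA x"
proof -
  from assms have x: "0 < x" "x < 1" by auto
  have dR: "deriv muR x = 1" unfolding muR_def[abs_def] using DERIV_imp_deriv[OF DERIV_ident] by simp
  have "(muT has_real_derivative 2 / pi * inverse (sqrt (1 - x^2))) (at x)"
    unfolding muT_def[abs_def] using x
    by (auto intro!: derivative_eq_intros)
  hence dT: "deriv muT x = 2 / pi * inverse (sqrt (1 - x^2))" by (rule DERIV_imp_deriv)
  have x2: "x^2 < 1" using x abs_square_less_1 by force
  have p: "0 < 1 - x^2" using x2 by simp
  hence sq: "(sqrt (1 - x^2))^2 = 1 - x^2" by simp
  have ds: "(deriv muT x)^2 = 4 / (pi^2 * (1 - x^2))"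
    unfolding dT power_mult_distrib using sq p by (simp add: field_simps power_mult_distrib)
  have p2: "0 < 1 - x*x" using p by (simp add: power2_eq_square)
  show ?thesis unfolding ARE_RT_def dR ds sigT2_def sigR2_def fA_def gA_def
    by (rule are_alg[OF pi_gt_zero p])
qed


definition sq :: "real \<Rightarrow> real" where "sq y = sqrt (4 - y^2)"
definition asn :: "real \<Rightarrow> real" where "asn y = arcsin (y/2)"

lemma d_sq:
  assumes "(g has_real_derivative g') (at x)" "\<bar>g x\<bar> < 2" "D = -(g x)/sq (g x) * g'"
  shows "((\<lambda>y. sq (g y)) has_real_derivative D) (at x)"
proof -
  have p: "0 < 4 - (g x)^2" using assms(2) abs_square_less_1[of "g x/2"] by (simp add: power_divide)
  have "((\<lambda>y. sqrt (4 - (g y)^2)) has_real_derivative inverse (sqrt (4 - (g x)^2)) / 2 * (0 - 2 * g x ^ 1 * g')) (at x)"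
    by (rule derivative_eq_intros refl assms(1) | use p in simp)+
  then show ?thesis unfolding sq_def assms(3) using p by (simp add: field_simps)
qed

lemma d_asn:
  assumes "(g has_real_derivative g') (at x)" "\<bar>g x\<bar> < 2" "D = g'/sq (g x)"
  shows "((\<lambda>y. asn (g y)) has_real_derivative D) (at x)"
proof -
  have h: "sqrt (1 - (g x/2)^2) = sq (g x) / 2" using sq_half[OF assms(2)] by (simp add: sq_def)
  have "((\<lambda>y. arcsin (g y / 2)) has_real_derivative inverse (sqrt (1 - (g x/2)^2)) * (g' / 2)) (at x)"
    using assms(2) by (auto intro!: derivative_eq_intros assms(1))
  then show ?thesis unfolding asn_def assms(3) h by (simp add: field_simps)
qed

lemma sq_props: "\<bar>x\<bar> < 2 \<Longrightarrow> sq x > 0 \<and> (sq x)^2 = 4 - x^2"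
proof -
  assume "\<bar>x\<bar> < 2"
  hence p: "0 < 4 - x^2" using abs_square_less_1[of "x/2"] by (simp add: power_divide)
  thus ?thesis by (simp add: sq_def)
qed

lemma basics:
  assumes "x \<in> {0<..<1::real}"
  shows "0 < x" "x < 1" "x^2 < 1" "0 < 2 - x^2" "0 < 4 - x^2" "0 < 50 - 29*x^2 + 9*x^4"
    "\<bar>x\<bar> < 2" "sq x > 0" "(sq x)^2 = 4 - x^2" "sq x * sq x = 4 - x^2" "2 - x^2 \<noteq> 0" "50 - 29*x^2 + 9*x^4 \<noteq> 0" "sq x \<noteq> 0"
proof -
  show x: "0 < x" "x < 1" using assms by auto
  show x2: "x^2 < 1" using x abs_square_less_1 by force
  show "0 < 2 - x^2" "0 < 4 - x^2" using x2 by auto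
  have e: "50 - 29*x^2 + 9*x^4 = 9*(x^2-29/18)^2 + 959/36"
    by (simp add: power2_eq_square power4_eq_xxxx algebra_simps)
  show "0 < 50 - 29*x^2 + 9*x^4" unfolding e by (simp add: add_nonneg_pos)
  thus "50 - 29*x^2 + 9*x^4 \<noteq> 0" by simp
  show "2 - x^2 \<noteq> 0" using x2 by simp
  show a: "\<bar>x\<bar> < 2" using x by simp
  show "sq x > 0" "(sq x)^2 = 4 - x^2" "sq x \<noteq> 0" using sq_props[OF a] by auto
  thus "sq x * sq x = 4 - x^2" by (simp add: power2_eq_square)
qed

lemma fI_Suc: "fI a (Suc i) x = acoef (Suc i) x * deriv (fI a i) x" by simp
lemma gI_Suc: "gI a (Suc i) x = acoef (Suc i) x * deriv (gI a i) x" by simp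
lemma ac1: "acoef 1 x = sq x" by (simp add: sq_def)
lemma ac2: "acoef 2 x = sq x / (2 - x^2)" by (simp add: sq_def numeral_2_eq_2)
lemma ac3: "acoef 3 x = (2 - x^2)^2 / (50 - 29*x^2 + 9*x^4)" by (simp add: numeral_3_eq_3)
lemma ac4: "acoef 4 x = (50 - 29*x^2 + 9*x^4)^2 / (2 - x^2)" by (simp add: eval_nat_numeral)
lemma fI2: "fI a 2 x = acoef 2 x * deriv (fI a 1) x" unfolding Suc_1[symmetric] by (rule fI_Suc)
lemma fI3: "fI a 3 x = acoef 3 x * deriv (fI a 2) x" proof - have e: "(3::nat) = Suc 2" by simp show ?thesis unfolding e by (rule fI_Suc) qed
lemma fI4: "fI a 4 x = acoef 4 x * deriv (fI a 3) x" proof - have e: "(4::nat) = Suc 3" by simp show ?thesis unfolding e by (rule fI_Suc) qed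
lemma gI1: "gI a 1 x = acoef 1 x * deriv (gI a 0) x" using gI_Suc[of a 0 x] by simp
lemma gI2: "gI a 2 x = acoef 2 x * deriv (gI a 1) x" unfolding Suc_1[symmetric] by (rule gI_Suc)
lemma gI3: "gI a 3 x = acoef 3 x * deriv (gI a 2) x" proof - have e: "(3::nat) = Suc 2" by simp show ?thesis unfolding e by (rule gI_Suc) qed
lemma gI4: "gI a 4 x = acoef 4 x * deriv (gI a 3) x" proof - have e: "(4::nat) = Suc 3" by simp show ?thesis unfolding e by (rule gI_Suc) qed

lemma step1:
  assumes "x \<in> {0<..<1::real}"
  shows "fI a 1 x = -72*asn x - sq x*(-18*bcoef a*x + 9*ccoef a*(1-3*x^2+2*a*x))"
proof -
  note B = basics[OF assms]
  define b where "b = bcoef a"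
  define c where "c = ccoef a"
  have f0: "f0 a = (\<lambda>y. pi^2 - 36 * (asn y)^2 - b * (9*(1-y^2)) - c * (y - a) * (9*(1-y^2)))"
    by (auto simp: f0_def fA_def gA_def b_def c_def asn_def)
  have "(f0 a has_real_derivative -72*asn x/sq x - (-18*b*x + 9*c*(1-3*x^2+2*a*x))) (at x)"
    unfolding f0
    using B by (auto intro!: derivative_eq_intros d_asn simp: field_simps power2_eq_square)
  hence "deriv (f0 a) x = -72*asn x/sq x - (-18*b*x + 9*c*(1-3*x^2+2*a*x))" by (rule DERIV_imp_deriv)
  thus ?thesis using B by (simp add: One_nat_def sq_def[symmetric] b_def[symmetric] c_def[symmetric] field_simps)
qed

lemma step2:
  assumes "x \<in> {0<..<1::real}"
  shows "fI a 2 x = 36*bcoef a - 9*ccoef a*(4*a-9*x) + (63*ccoef a*x - 72)/(2-x^2)"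
proof -
  note B = basics[OF assms]
  define b where "b = bcoef a"
  define c where "c = ccoef a"
  have d: "((\<lambda>y. -72*asn y - sq y*(-18*b*y + 9*c*(1-3*y^2+2*a*y))) has_real_derivative
     (-72 + x*(-18*b*x + 9*c*(1-3*x^2+2*a*x)) - (sq x * sq x)*(-18*b + 9*c*(-6*x+2*a)))/sq x) (at x)"
    using B by (auto intro!: derivative_eq_intros d_asn d_sq simp: field_simps)
  have dv: "deriv (fI a 1) x = (-72 + x*(-18*b*x + 9*c*(1-3*x^2+2*a*x)) - (sq x * sq x)*(-18*b + 9*c*(-6*x+2*a)))/sq x"
    by (rule deriv_on_open[OF open_greaterThanLessThan assms _ d]) (simp only: step1 b_def c_def)
  have "fI a 2 x = (-72 + x*(-18*b*x + 9*c*(1-3*x^2+2*a*x)) - (4-x^2)*(-18*b + 9*c*(-6*x+2*a)))/(2-x^2)"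
    unfolding fI2 ac2 dv B(10) using B by (simp add: field_simps)
  then show ?thesis using B unfolding b_def c_def by (simp add: field_simps power2_eq_square)
qed

lemma step3:
  assumes "x \<in> {0<..<1::real}"
  shows "fI a 3 x = 9*ccoef a - 144*x/(50 - 29*x^2 + 9*x^4)"
proof -
  note B = basics[OF assms]
  define c where "c = ccoef a"
  define b where "b = bcoef a"
  have d: "((\<lambda>y. 36*b - 9*c*(4*a-9*y) + (63*c*y - 72)/(2-y^2)) has_real_derivative
     81*c + (63*c*(2-x^2) + (63*c*x-72)*(2*x))/(2-x^2)^2) (at x)"
    using B(1-10) apply (auto intro!: derivative_eq_intros)
    apply (simp add: field_simps power2_eq_square)
    done
  have dv: "deriv (fI a 2) x = 81*c + (63*c*(2-x^2) + (63*c*x-72)*(2*x))/(2-x^2)^2"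
    by (rule deriv_on_open[OF open_greaterThanLessThan assms _ d]) (simp only: step2 b_def c_def)
  have "fI a 3 x = (81*c*(2-x^2)^2 + 63*c*(2-x^2) + (63*c*x-72)*(2*x))/(50 - 29*x^2 + 9*x^4)"
    unfolding fI3 ac3 dv using B(11,12) by (simp add: divide_simps; simp add: algebra_simps eval_nat_numeral)
  also have "\<dots> = 9*c - 144*x/(50 - 29*x^2 + 9*x^4)"
    using B(11,12) by (simp add: divide_simps; simp add: algebra_simps eval_nat_numeral)
  finally show ?thesis unfolding c_def .
qed

lemma step4:
  assumes "x \<in> {0<..<1::real}"
  shows "fI a 4 x = -144*(50 + 29*x^2 - 27*x^4)/(2 - x^2)"
proof -
  note B = basics[OF assms]
  define c where "c = ccoef a"
  have d: "((\<lambda>y. 9*c - 144*y/(50 - 29*y^2 + 9*y^4)) has_real_derivative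
     -144*((50 - 29*x^2 + 9*x^4) - x*(-58*x+36*x^3))/(50 - 29*x^2 + 9*x^4)^2) (at x)"
    using B(1-10) apply (auto intro!: derivative_eq_intros)
    using B(11,12) apply (simp add: divide_simps power2_eq_square; simp add: algebra_simps eval_nat_numeral)
    done
  have dv: "deriv (fI a 3) x = -144*((50 - 29*x^2 + 9*x^4) - x*(-58*x+36*x^3))/(50 - 29*x^2 + 9*x^4)^2"
    by (rule deriv_on_open[OF open_greaterThanLessThan assms _ d]) (simp only: step3 c_def)
  have "fI a 4 x = -144*((50 - 29*x^2 + 9*x^4) - x*(-58*x+36*x^3))/(2 - x^2)"
    unfolding fI4 ac4 dv using B(11,12) by (simp add: divide_simps power2_eq_square; simp add: algebra_simps eval_nat_numeral)
  then show ?thesis using B(11,12) by (simp add: divide_simps; simp add: algebra_simps eval_nat_numeral)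
qed
lemma gstep1:
  assumes "x \<in> {0<..<1::real}"
  shows "gI a 1 x = sq x * (18*(x-a)*(1-x^2) - 18*x*(x-a)^2)"
proof -
  have g0: "g0 a = (\<lambda>y. (y-a)^2 * (9*(1-y^2)))" by (auto simp: g0_def gA_def)
  have "(g0 a has_real_derivative 18*(x-a)*(1-x^2) - 18*x*(x-a)^2) (at x)"
    unfolding g0 by (auto intro!: derivative_eq_intros simp: algebra_simps eval_nat_numeral)
  hence "deriv (g0 a) x = 18*(x-a)*(1-x^2) - 18*x*(x-a)^2" by (rule DERIV_imp_deriv)
  thus ?thesis unfolding gI1 ac1 by simp
qed

definition Lp :: "real \<Rightarrow> real \<Rightarrow> real" where
  "Lp a x = 144*x^4 - 162*a*x^3 + (36*a^2 - 468)*x^2 + 450*a*x + 72 - 72*a^2"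
definition Lp' :: "real \<Rightarrow> real \<Rightarrow> real" where
  "Lp' a x = 576*x^3 - 486*a*x^2 + 2*(36*a^2 - 468)*x + 450*a"
definition Kp :: "real \<Rightarrow> real" where
  "Kp x = -1728*x + 1152*x^3 - 288*x^5"
definition Kp' :: "real \<Rightarrow> real" where
  "Kp' x = -1728 + 3456*x^2 - 1440*x^4"

lemma gstep2:
  assumes "x \<in> {0<..<1::real}"
  shows "gI a 2 x = Lp a x / (2 - x^2)"
proof -
  note B = basics[OF assms]
  have d: "((\<lambda>y. sq y * (18*(y-a)*(1-y^2) - 18*y*(y-a)^2)) has_real_derivative
     (-x*(18*(x-a)*(1-x^2) - 18*x*(x-a)^2) + sq x * sq x * (18*(1-x^2) - 36*x*(x-a) - 18*(x-a)^2 - 36*x*(x-a)))/sq x) (at x)"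
    using B(1-8) apply (auto intro!: derivative_eq_intros d_sq)
    using B(13) apply (simp add: divide_simps; simp add: algebra_simps eval_nat_numeral)
    done
  have dv: "deriv (gI a 1) x = (-x*(18*(x-a)*(1-x^2) - 18*x*(x-a)^2) + sq x * sq x * (18*(1-x^2) - 36*x*(x-a) - 18*(x-a)^2 - 36*x*(x-a)))/sq x"
    by (rule deriv_on_open[OF open_greaterThanLessThan assms _ d]) (simp only: gstep1)
  have "gI a 2 x = (-x*(18*(x-a)*(1-x^2) - 18*x*(x-a)^2) + (4 - x^2) * (18*(1-x^2) - 36*x*(x-a) - 18*(x-a)^2 - 36*x*(x-a)))/(2-x^2)"
    unfolding gI2 ac2 dv B(10) using B(11,13) by (simp add: divide_simps)
  also have "\<dots> = Lp a x / (2 - x^2)"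
    unfolding Lp_def by (simp add: algebra_simps eval_nat_numeral)
  finally show ?thesis .
qed

lemma gstep3:
  assumes "x \<in> {0<..<1::real}"
  shows "gI a 3 x = 18*a + Kp x / (50 - 29*x^2 + 9*x^4)"
proof -
  note B = basics[OF assms]
  have d: "((\<lambda>y. Lp a y / (2 - y^2)) has_real_derivative
     (Lp' a x * (2 - x^2) + Lp a x * (2*x)) / (2 - x^2)^2) (at x)"
    using B(1-10) unfolding Lp_def Lp'_def apply (auto intro!: derivative_eq_intros)
    using B(11,12) apply (simp add: divide_simps power2_eq_square; simp add: algebra_simps eval_nat_numeral)
    done
  have dv: "deriv (gI a 2) x = (Lp' a x * (2 - x^2) + Lp a x * (2*x)) / (2 - x^2)^2"
    by (rule deriv_on_open[OF open_greaterThanLessThan assms _ d]) (simp only: gstep2)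
  have "gI a 3 x = (Lp' a x * (2 - x^2) + Lp a x * (2*x)) / (50 - 29*x^2 + 9*x^4)"
    unfolding gI3 ac3 dv using B(11,12) by (simp add: divide_simps)
  also have "\<dots> = 18*a + Kp x / (50 - 29*x^2 + 9*x^4)"
    unfolding Lp_def Lp'_def Kp_def using B(11,12) by (simp add: divide_simps; simp add: algebra_simps eval_nat_numeral)
  finally show ?thesis .
qed

definition Mp :: "real \<Rightarrow> real" where
  "Mp y = 600 - 852*y + 408*y^2 - 102*y^3 + 18*y^4"

lemma gstep4:
  assumes "x \<in> {0<..<1::real}"
  shows "gI a 4 x = -144 * Mp (x^2) / (2 - x^2)"
proof -
  note B = basics[OF assms]
  have d: "((\<lambda>y. 18*a + Kp y / (50 - 29*y^2 + 9*y^4)) has_real_derivative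
     (Kp' x * (50 - 29*x^2 + 9*x^4) - Kp x * (-58*x + 36*x^3)) / (50 - 29*x^2 + 9*x^4)^2) (at x)"
    using B(1-10) unfolding Kp_def Kp'_def apply (auto intro!: derivative_eq_intros)
    using B(11,12) apply (simp add: divide_simps power2_eq_square; simp add: algebra_simps eval_nat_numeral)
    done
  have dv: "deriv (gI a 3) x = (Kp' x * (50 - 29*x^2 + 9*x^4) - Kp x * (-58*x + 36*x^3)) / (50 - 29*x^2 + 9*x^4)^2"
    by (rule deriv_on_open[OF open_greaterThanLessThan assms _ d]) (simp only: gstep3)
  have "gI a 4 x = (Kp' x * (50 - 29*x^2 + 9*x^4) - Kp x * (-58*x + 36*x^3)) / (2 - x^2)"
    unfolding gI4 ac4 dv using B(11,12) by (simp add: divide_simps power2_eq_square)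
  also have "\<dots> = -144 * Mp (x^2) / (2 - x^2)"
    unfolding Mp_def Kp_def Kp'_def using B(11,12) by (simp add: divide_simps; simp add: algebra_simps eval_nat_numeral)
  finally show ?thesis .
qed
lemma Mp_pos: assumes "0 \<le> y" "y \<le> 1" shows "Mp y > 0"
proof -
  define t where "t = 1 - y"
  have t: "0 \<le> t" using assms by (simp add: t_def)
  have e: "Mp y = 72 + 270*t + 210*t^2 + 30*t^3 + 18*t^4"
    unfolding Mp_def t_def by (simp add: algebra_simps eval_nat_numeral)
  have "0 \<le> t^2" "0 \<le> t^3" "0 \<le> t^4" using t by simp_all
  thus ?thesis unfolding e using t by linarith
qed

lemma W_pos: assumes "0 \<le> y" "y \<le> 1"
  shows "(29 - 54*y)*Mp y - (50+29*y-27*y^2)*(-852 + 816*y - 306*y^2 + 72*y^3) > 0"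
proof -
  define t where "t = 1 - y"
  have t: "0 \<le> t" "t \<le> 1" using assms by (simp_all add: t_def)
  have e: "(29 - 54*y)*Mp y - (50+29*y-27*y^2)*(-852 + 816*y - 306*y^2 + 72*y^3)
       = 12240 + 25728*t + 17220*t^2 + 5244*t^3 + 540*t^4 - 972*t^5"
    unfolding Mp_def t_def by (simp add: algebra_simps eval_nat_numeral)
  have "0 \<le> t^2" "0 \<le> t^3" "0 \<le> t^4" using t by simp_all
  moreover have "t^5 \<le> t^3" using t by (intro power_decreasing) auto
  ultimately show ?thesis unfolding e using t by linarith
qed

definition hh :: "real \<Rightarrow> real" where
  "hh z = (50 + 29*z^2 - 27*z^4) / (600 - 852*z^2 + 408*z^4 - 102*z^6 + 18*z^8)"

lemma Mp_sq: "Mp (z^2) = 600 - 852*z^2 + 408*z^4 - 102*z^6 + 18*z^8"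
  unfolding Mp_def by (simp add: power_mult[symmetric])

lemma hh_deriv:
  assumes "0 < z" "z < 1"
  shows "\<exists>y. DERIV hh z :> y \<and> y > 0"
proof -
  have z2: "0 \<le> z^2" "z^2 \<le> 1" using assms by (auto simp: power_le_one)
  have Mz: "600 - 852*z^2 + 408*z^4 - 102*z^6 + 18*z^8 > 0" using Mp_pos[OF z2] unfolding Mp_sq .
  have W: "(29 - 54*z^2)*Mp (z^2) - (50+29*z^2-27*(z^2)^2)*(-852 + 816*z^2 - 306*(z^2)^2 + 72*(z^2)^3) > 0"
    using W_pos[OF z2] .
  define D where "D = ((29*2*z - 27*4*z^3)*(600 - 852*z^2 + 408*z^4 - 102*z^6 + 18*z^8)
     - (50 + 29*z^2 - 27*z^4)*(-852*2*z + 408*4*z^3 - 102*6*z^5 + 18*8*z^7))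
       / (600 - 852*z^2 + 408*z^4 - 102*z^6 + 18*z^8)^2"
  have d: "DERIV hh z :> D"
    unfolding hh_def[abs_def] D_def using Mz
    apply (auto intro!: derivative_eq_intros)
    apply (simp add: divide_simps power2_eq_square; simp add: algebra_simps eval_nat_numeral)
    done
  have num: "(29*2*z - 27*4*z^3)*(600 - 852*z^2 + 408*z^4 - 102*z^6 + 18*z^8)
     - (50 + 29*z^2 - 27*z^4)*(-852*2*z + 408*4*z^3 - 102*6*z^5 + 18*8*z^7)
     = 2*z*((29 - 54*z^2)*Mp (z^2) - (50+29*z^2-27*(z^2)^2)*(-852 + 816*z^2 - 306*(z^2)^2 + 72*(z^2)^3))"
    unfolding Mp_def by (simp add: algebra_simps eval_nat_numeral)
  have "D > 0" unfolding D_def num using W assms Mz by (intro divide_pos_pos mult_pos_pos) auto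
  thus ?thesis using d by blast
qed

lemma r4_eq:
  assumes "x \<in> {0<..<1::real}"
  shows "rI a 4 x = hh x"
proof -
  note B = basics[OF assms]
  have z2: "0 \<le> x^2" "x^2 \<le> 1" using B(1,2) by (auto simp: power_le_one)
  have "Mp (x^2) > 0" using Mp_pos[OF z2] .
  hence M: "600 - 852*x^2 + 408*x^4 - 102*x^6 + 18*x^8 \<noteq> 0" unfolding Mp_sq by simp
  show ?thesis unfolding rI_def step4[OF assms] gstep4[OF assms] hh_def Mp_sq
    using B(11) M by (simp add: divide_simps; simp add: algebra_simps eval_nat_numeral)
qed

theorem lemma2:
  fixes a :: real
  assumes "0 \<le> a" and "a \<le> 1"
  shows "(\<forall>x\<in>{0<..<1}. ARE_RT x = fA x / gA x)
       \<and> strict_mono_on {0<..<1} (rI a 4)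
       \<and> (\<forall>x\<in>{0<..<1}. fI a 4 x < 0 \<and> gI a 4 x < 0)"
proof (intro conjI ballI strict_mono_onI)
  fix x :: real assume x: "x \<in> {0<..<1}"
  show "ARE_RT x = fA x / gA x" by (rule ARE_part[OF x])
next
  fix r s :: real assume r: "r \<in> {0<..<1}" and s: "s \<in> {0<..<1}" and rs: "r < s"
  have "hh r < hh s"
    by (rule DERIV_pos_imp_increasing[OF rs]) (rule hh_deriv, use r s in auto)
  thus "rI a 4 r < rI a 4 s" using r4_eq[OF r] r4_eq[OF s] by simp
next
  fix x :: real assume x: "x \<in> {0<..<1}"
  note B = basics[OF x]
  have x4: "x^4 < 1" using B(1,2) by (simp add: power_less_one_iff)
  have "0 < 50 + 29*x^2 - 27*x^4" using x4 B(1) by (smt (verit) zero_le_power2)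
  thus "fI a 4 x < 0" unfolding step4[OF x] using B(4) by (simp add: divide_neg_pos)
  have z2: "0 \<le> x^2" "x^2 \<le> 1" using B(1,2) by (auto simp: power_le_one)
  have "Mp (x^2) > 0" using Mp_pos[OF z2] .
  thus "gI a 4 x < 0" unfolding gstep4[OF x] using B(4) by (simp add: divide_neg_pos)
qed
end
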